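(* Let $\mathbf A=(A,\wedge,\vee,\cdot,1,\sim,-)$ be a complete perfect DInFL-algebra. Put $I_1=\{i\in J^\infty(\mathbf A)\mid i\leqslant 1\}$ and, for $a,b,c\in J^\infty(\mathbf A)$, define $a\preccurlyeq b$ iff $b\leqslant a$; $c\in a\circ b$ iff $c\leqslant a\cdot b$; $a^\sim={\sim}\kappa(a)$; and $a^-=-\kappa(a)$. Then $a^\sim,a^-\in J^\infty(\mathbf A)$ for all $a\in J^\infty(\mathbf A)$, and $\mathbf A_+=(J^\infty(\mathbf A),I_1,\preccurlyeq,\circ,{}^\sim,{}^-)$ is a DInFL-frame.
   Context: An InFL-algebra is a structure $(A,\wedge,\vee,\cdot,1,\sim,-)$ with $(A,\wedge,\vee)$ a lattice, $(A,\cdot,1)$ a monoid, and for all $a,b,c$: $a\cdot b\leqslant c\iff a\leqslant -(b\cdot{\sim}c)\iff b\leqslant{\sim}(-c\cdot a)$; a DInFL-algebra is one whose lattice reduct is distributive. $J^\infty(\mathbf A)$ and $M^\infty(\mathbf A)$ denote the completely join-irreducible and completely meet-irreducible elements of the lattice. A lattice is complete perfect if it is complete, every element is the join of the completely join-irreducibles below it, and the meet of the completely meet-irreducibles above it. For $j\in J^\infty(\mathbf A)$, $\kappa(j)=\bigvee\{a\in A\mid j\not\leqslant a\}$. For a set $W$ and $\circ:W\times W\to\mathcal P(W)$, $U\circ V=\bigcup\{a\circ b\mid a\in U,b\in V\}$, $x\circ V=\{x\}\circ V$, $U\circ y=U\circ\{y\}$; $x^{\sim-}$ means $(x^\sim)^-$.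 A DInFL-frame is a tuple $(W,I,\preccurlyeq,\circ,{}^\sim,{}^-)$ with $I\subseteq W$, $\preccurlyeq$ a partial order, $\circ:W\times W\to\mathcal P(W)$, ${}^\sim,{}^-:W\to W$, such that for all $u,v,x,y,z$: (F1) $x\preccurlyeq y$ iff $y\in I\circ x$ iff $y\in x\circ I$; (F2) $x\preccurlyeq y$, $x\in I$ imply $y\in I$; (F3) $x\preccurlyeq y$, $x\in u\circ v$ imply $y\in u\circ v$; (F4) $(x\circ y)\circ z=x\circ(y\circ z)$; (F5) $z^\sim\in x\circ y$ iff $y^-\in z\circ x$; (F6) $x^{\sim-}\preccurlyeq x$ and $x^{-\sim}\preccurlyeq x$. *)

theory Defs
  imports Main
begin

text \<open>An InFL-algebra whose lattice reduct is the complete lattice of the carrier type 'a.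
  mult = monoid multiplication, one = unit, nt = the negation written with a tilde,
  nm = the negation written with a minus.\<close>

definition InFL_algebra ::
  "('a::lattice \<Rightarrow> 'a \<Rightarrow> 'a) \<Rightarrow> 'a \<Rightarrow> ('a \<Rightarrow> 'a) \<Rightarrow> ('a \<Rightarrow> 'a) \<Rightarrow> bool" where
  "InFL_algebra mult one nt nm \<longleftrightarrow>
     (\<forall>a b c. mult (mult a b) c = mult a (mult b c)) \<and>
     (\<forall>a. mult one a = a \<and> mult a one = a) \<and>
     (\<forall>a b c. (mult a b \<le> c \<longleftrightarrow> a \<le> nm (mult b (nt c))) \<and>
              (a \<le> nm (mult b (nt c)) \<longleftrightarrow> b \<le> nt (mult (nm c) a)))"

definition DInFL_algebra ::
  "('a::lattice \<Rightarrow> 'a \<Rightarrow> 'a) \<Rightarrow> 'a \<Rightarrow> ('a \<Rightarrow> 'a) \<Rightarrow> ('a \<Rightarrow> 'a) \<Rightarrow> bool" where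
  "DInFL_algebra mult one nt nm \<longleftrightarrow>
     InFL_algebra mult one nt nm \<and>
     (\<forall>x y z::'a. inf x (sup y z) = sup (inf x y) (inf x z))"

definition Jinf :: "'a::complete_lattice set" where
  "Jinf = {j. \<forall>S. j = Sup S \<longrightarrow> j \<in> S}"

definition Minf :: "'a::complete_lattice set" where
  "Minf = {m. \<forall>S. m = Inf S \<longrightarrow> m \<in> S}"

text \<open>Perfectness (completeness is given by the type class).\<close>

definition perfect_lattice :: "'a::complete_lattice itself \<Rightarrow> bool" where
  "perfect_lattice _ \<longleftrightarrow>
     (\<forall>a::'a. a = Sup {j \<in> Jinf. j \<le> a} \<and> a = Inf {m \<in> Minf. a \<le> m})"

definition kappa :: "'a::complete_lattice \<Rightarrow> 'a" where
  "kappa j = Sup {a. \<not> j \<le> a}"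

definition setcirc :: "('w \<Rightarrow> 'w \<Rightarrow> 'w set) \<Rightarrow> 'w set \<Rightarrow> 'w set \<Rightarrow> 'w set" where
  "setcirc circ U V = (\<Union>a\<in>U. \<Union>b\<in>V. circ a b)"

definition DInFL_frame ::
  "'w set \<Rightarrow> 'w set \<Rightarrow> ('w \<Rightarrow> 'w \<Rightarrow> bool) \<Rightarrow> ('w \<Rightarrow> 'w \<Rightarrow> 'w set)
     \<Rightarrow> ('w \<Rightarrow> 'w) \<Rightarrow> ('w \<Rightarrow> 'w) \<Rightarrow> bool" where
  "DInFL_frame W I pr circ nt nm \<longleftrightarrow>
     I \<subseteq> W \<and>
     (\<forall>x\<in>W. \<forall>y\<in>W. circ x y \<subseteq> W) \<and>
     (\<forall>x\<in>W. nt x \<in> W \<and> nm x \<in> W) \<and>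
     (\<forall>x\<in>W. pr x x) \<and>
     (\<forall>x\<in>W. \<forall>y\<in>W. pr x y \<and> pr y x \<longrightarrow> x = y) \<and>
     (\<forall>x\<in>W. \<forall>y\<in>W. \<forall>z\<in>W. pr x y \<and> pr y z \<longrightarrow> pr x z) \<and>
     \<comment> \<open>F1\<close>
     (\<forall>x\<in>W. \<forall>y\<in>W. (pr x y \<longleftrightarrow> y \<in> setcirc circ I {x}) \<and>
                     (y \<in> setcirc circ I {x} \<longleftrightarrow> y \<in> setcirc circ {x} I)) \<and>
     \<comment> \<open>F2\<close>
     (\<forall>x\<in>W. \<forall>y\<in>W. pr x y \<and> x \<in> I \<longrightarrow> y \<in> I) \<and>
     \<comment> \<open>F3\<close>
     (\<forall>x\<in>W. \<forall>y\<in>W. \<forall>u\<in>W. \<forall>v\<in>W. pr x y \<and> x \<in> circ u v \<longrightarrow> y \<in> circ u v) \<and>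
     \<comment> \<open>F4\<close>
     (\<forall>x\<in>W. \<forall>y\<in>W. \<forall>z\<in>W.
        setcirc circ (circ x y) {z} = setcirc circ {x} (circ y z)) \<and>
     \<comment> \<open>F5\<close>
     (\<forall>x\<in>W. \<forall>y\<in>W. \<forall>z\<in>W. nt z \<in> circ x y \<longleftrightarrow> nm y \<in> circ z x) \<and>
     \<comment> \<open>F6\<close>
     (\<forall>x\<in>W. pr (nm (nt x)) x \<and> pr (nt (nm x)) x)"

end

theory Submission
  imports Defs
begin

locale dinfl =
  fixes mult :: "'a::complete_lattice \<Rightarrow> 'a \<Rightarrow> 'a"
    and one :: 'a and nt nm :: "'a \<Rightarrow> 'a"
  assumes A: "DInFL_algebra mult one nt nm"
    and P: "perfect_lattice TYPE('a)"
begin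

lemma assoc: "mult (mult a b) c = mult a (mult b c)"
  using A unfolding DInFL_algebra_def InFL_algebra_def by blast
lemma unitl: "mult one a = a"
  using A unfolding DInFL_algebra_def InFL_algebra_def by blast
lemma unitr: "mult a one = a"
  using A unfolding DInFL_algebra_def InFL_algebra_def by blast
lemma res1: "mult a b \<le> c \<longleftrightarrow> a \<le> nm (mult b (nt c))"
  using A unfolding DInFL_algebra_def InFL_algebra_def by blast
lemma res2: "mult a b \<le> c \<longleftrightarrow> b \<le> nt (mult (nm c) a)"
  using A unfolding DInFL_algebra_def InFL_algebra_def by blast
lemma distr: "inf x (sup y z) = sup (inf x y) (inf x (z::'a))"
  using A unfolding DInFL_algebra_def by blast
lemma jgen: "(a::'a) = Sup {j\<in>Jinf. j \<le> a}"
  using P unfolding perfect_lattice_def by blast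
lemma mgen: "(a::'a) = Inf {m\<in>Minf. a \<le> m}"
  using P unfolding perfect_lattice_def by blast

lemma nm_nt: "nm (nt c) = c"
proof -
  have "a \<le> c \<longleftrightarrow> a \<le> nm (nt c)" for a
    using res1[of a one c] by (simp add: unitr unitl)
  then show ?thesis by (metis order.refl order.antisym)
qed

lemma nt_nm: "nt (nm c) = c"
proof -
  have "b \<le> c \<longleftrightarrow> b \<le> nt (nm c)" for b
    using res2[of one b c] by (simp add: unitr unitl)
  then show ?thesis by (metis order.refl order.antisym)
qed

lemma mono_l: "a \<le> a' \<Longrightarrow> mult a b \<le> mult a' b"
  by (metis res1 order.refl order.trans)
lemma mono_r: "b \<le> b' \<Longrightarrow> mult a b \<le> mult a b'"
  by (metis res2 order.refl order.trans)

lemma nt_anti: assumes "x \<le> y" shows "nt y \<le> nt x"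
proof -
  have key: "mult a b \<le> nt one \<longleftrightarrow> b \<le> nt a" for a b
    using res2[of a b "nt one"] by (simp add: nm_nt unitl)
  have "mult y (nt y) \<le> nt one" using key by simp
  then have "mult x (nt y) \<le> nt one" using mono_l[OF assms] order.trans by blast
  then show ?thesis using key by simp
qed

lemma nm_anti: assumes "x \<le> y" shows "nm y \<le> nm x"
proof -
  have key: "mult a b \<le> nm one \<longleftrightarrow> a \<le> nm b" for a b
    using res1[of a b "nm one"] by (simp add: nt_nm unitr)
  have "mult (nm y) y \<le> nm one" using key by simp
  then have "mult (nm y) x \<le> nm one" using mono_r[OF assms] order.trans by blast
  then show ?thesis using key by simp
qed

lemma nt_le_iff: "nt x \<le> nt y \<longleftrightarrow> y \<le> x"
  by (metis nt_anti nm_anti nm_nt)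
lemma nm_le_iff: "nm x \<le> nm y \<longleftrightarrow> y \<le> x"
  by (metis nt_anti nm_anti nt_nm)
lemma gal1: "nt a \<le> b \<longleftrightarrow> nm b \<le> a"
  by (metis nm_anti nt_anti nm_nt nt_nm)
lemma gal2: "a \<le> nt b \<longleftrightarrow> b \<le> nm a"
  by (metis nm_anti nt_anti nm_nt nt_nm)

lemma J_aux:
  fixes j :: 'a
  assumes j: "j \<in> Jinf"
  shows "\<exists>m. \<not> j \<le> m \<and> (\<forall>s. \<not> j \<le> s \<longrightarrow> s \<le> m)"
proof -
  define js where "js = Sup {x. x < j}"
  have js_le: "js \<le> j" unfolding js_def by (rule Sup_least) simp
  have "js \<noteq> j"
  proof
    assume "js = j"
    moreover have "\<forall>S. j = Sup S \<longrightarrow> j \<in> S" using j by (simp add: Jinf_def)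
    ultimately have "j \<in> {x. x < j}" unfolding js_def by metis
    then show False by simp
  qed
  with js_le have jsl: "js < j" by simp
  have "\<exists>m\<in>Minf. js \<le> m \<and> \<not> j \<le> m"
  proof (rule ccontr)
    assume "\<not> ?thesis"
    then have "j \<le> Inf {m\<in>Minf. js \<le> m}" by (auto intro: Inf_greatest)
    then have "j \<le> js" using mgen[of js] by simp
    with jsl show False by simp
  qed
  then obtain m where m: "m \<in> Minf" "js \<le> m" "\<not> j \<le> m" by blast
  define ms where "ms = Inf {x. m < x}"
  have ms_ge: "m \<le> ms" unfolding ms_def by (rule Inf_greatest) simp
  have "ms \<noteq> m"
  proof
    assume "ms = m"
    moreover have "\<forall>S. m = Inf S \<longrightarrow> m \<in> S" using m(1) by (simp add: Minf_def)
    ultimately have "m \<in> {x. m < x}" unfolding ms_def by metis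
    then show False by simp
  qed
  with ms_ge have msl: "m < ms" by simp
  have ms_below: "m < x \<Longrightarrow> ms \<le> x" for x unfolding ms_def by (rule Inf_lower) simp
  have below_js: "x < j \<Longrightarrow> x \<le> js" for x unfolding js_def by (rule Sup_upper) simp
  have "\<forall>s. \<not> j \<le> s \<longrightarrow> s \<le> m"
  proof (intro allI impI)
    fix s assume s: "\<not> j \<le> s"
    show "s \<le> m"
    proof (rule ccontr)
      assume ns: "\<not> s \<le> m"
      define t where "t = sup s m"
      have "m < t" using ns unfolding t_def by (metis less_le sup.cobounded1 sup.cobounded2)
      then have mst: "ms \<le> t" by (rule ms_below)
      have "inf j s < j" using s by (metis inf.absorb_iff1 inf_le1 less_le inf.commute)
      then have h1: "inf j s \<le> m" using below_js m(2) order.trans by blast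
      have "inf j m < j" using m(3) by (metis inf.absorb_iff1 inf_le1 less_le inf.commute)
      then have h2: "inf j m \<le> m" using below_js m(2) order.trans by blast
      have jt: "inf j t \<le> m" unfolding t_def using distr[of j s m] h1 h2 by simp
      have "m < sup j m" using m(3) by (metis less_le sup.cobounded1 sup.cobounded2)
      then have msj: "ms \<le> sup j m" by (rule ms_below)
      have "ms = inf ms (sup j m)" using msj by (simp add: inf.absorb1)
      also have "\<dots> = sup (inf ms j) (inf ms m)" by (rule distr)
      also have "\<dots> \<le> m"
      proof (rule sup_least)
        have "inf ms j \<le> inf j t" using mst by (metis inf_commute inf_mono order.refl)
        then show "inf ms j \<le> m" using jt order.trans by blast
        show "inf ms m \<le> m" by simp
      qed
      finally show False using msl by simp
    qed
  qed
  with m show ?thesis by blast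
qed

lemma J_prime:
  fixes j :: 'a
  assumes "j \<in> Jinf" "j \<le> Sup S" shows "\<exists>s\<in>S. j \<le> s"
proof (rule ccontr)
  assume nt: "\<not> (\<exists>s\<in>S. j \<le> s)"
  obtain m where m: "\<not> j \<le> m" "\<forall>s. \<not> j \<le> s \<longrightarrow> s \<le> m" using J_aux[OF assms(1)] by blast
  have "Sup S \<le> m" using m(2) nt by (auto intro: Sup_least)
  with assms(2) m(1) show False using order.trans by blast
qed

lemma kappa_iff:
  fixes j :: 'a
  assumes "j \<in> Jinf" shows "j \<le> a \<longleftrightarrow> \<not> a \<le> kappa j"
proof -
  obtain m where m: "\<not> j \<le> m" "\<forall>s. \<not> j \<le> s \<longrightarrow> s \<le> m" using J_aux[OF assms(1)] by blast
  have "kappa j \<le> m" unfolding kappa_def using m(2) by (auto intro: Sup_least)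
  then have nk: "\<not> j \<le> kappa j" using m(1) order.trans by blast
  have "\<not> j \<le> a \<Longrightarrow> a \<le> kappa j" unfolding kappa_def by (rule Sup_upper) simp
  then show ?thesis using nk order.trans by blast
qed

lemma nt_kappa_J:
  assumes j: "j \<in> Jinf" shows "nt (kappa j) \<in> Jinf"
  unfolding Jinf_def
proof (intro CollectI allI impI)
  fix S assume S: "nt (kappa j) = Sup S"
  show "nt (kappa j) \<in> S"
  proof (rule ccontr)
    assume ni: "nt (kappa j) \<notin> S"
    have "s \<le> nt j" if "s \<in> S" for s
    proof -
      have "s \<le> nt (kappa j)" using S that by (simp add: Sup_upper)
      then have "kappa j \<le> nm s" using gal2 by blast
      moreover have "nm s \<noteq> kappa j" using ni that by (metis nt_nm)
      ultimately have "\<not> nm s \<le> kappa j" by simp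
      then have "j \<le> nm s" using kappa_iff[OF j] by simp
      then show ?thesis using gal2 by blast
    qed
    then have "Sup S \<le> nt j" by (auto intro: Sup_least)
    then have "nt (kappa j) \<le> nt j" using S by simp
    then have "j \<le> kappa j" using nt_le_iff by blast
    then show False using kappa_iff[OF j] by simp
  qed
qed

lemma nm_kappa_J:
  assumes j: "j \<in> Jinf" shows "nm (kappa j) \<in> Jinf"
  unfolding Jinf_def
proof (intro CollectI allI impI)
  fix S assume S: "nm (kappa j) = Sup S"
  show "nm (kappa j) \<in> S"
  proof (rule ccontr)
    assume ni: "nm (kappa j) \<notin> S"
    have "s \<le> nm j" if "s \<in> S" for s
    proof -
      have "s \<le> nm (kappa j)" using S that by (simp add: Sup_upper)
      then have "kappa j \<le> nt s" using gal2 by blast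
      moreover have "nt s \<noteq> kappa j" using ni that by (metis nm_nt)
      ultimately have "\<not> nt s \<le> kappa j" by simp
      then have "j \<le> nt s" using kappa_iff[OF j] by simp
      then show ?thesis using gal2 by blast
    qed
    then have "Sup S \<le> nm j" by (auto intro: Sup_least)
    then have "nm (kappa j) \<le> nm j" using S by simp
    then have "j \<le> kappa j" using nm_le_iff by blast
    then show False using kappa_iff[OF j] by simp
  qed
qed

lemma mult_Sup_l: "mult (Sup S) b \<le> Sup ((\<lambda>a. mult a b) ` S)"
proof -
  have "Sup S \<le> nm (mult b (nt (Sup ((\<lambda>a. mult a b) ` S))))"
    by (rule Sup_least) (metis res1 image_eqI Sup_upper)
  then show ?thesis using res1 by blast
qed

lemma mult_Sup_r: "mult a (Sup S) \<le> Sup ((\<lambda>b. mult a b) ` S)"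
proof -
  have "Sup S \<le> nt (mult (nm (Sup ((\<lambda>b. mult a b) ` S))) a)"
    by (rule Sup_least) (metis res2 image_eqI Sup_upper)
  then show ?thesis using res2 by blast
qed

lemma prime_l:
  assumes "c \<in> Jinf" "c \<le> mult x b"
  shows "\<exists>a\<in>Jinf. a \<le> x \<and> c \<le> mult a b"
proof -
  have "c \<le> Sup ((\<lambda>a. mult a b) ` {j\<in>Jinf. j \<le> x})"
    using assms(2) mult_Sup_l[of "{j\<in>Jinf. j \<le> x}" b] jgen[of x] by (metis order.trans)
  from J_prime[OF assms(1) this] show ?thesis by blast
qed

lemma prime_r:
  assumes "c \<in> Jinf" "c \<le> mult a x"
  shows "\<exists>b\<in>Jinf. b \<le> x \<and> c \<le> mult a b"
proof -
  have "c \<le> Sup ((\<lambda>b. mult a b) ` {j\<in>Jinf. j \<le> x})"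
    using assms(2) mult_Sup_r[of a "{j\<in>Jinf. j \<le> x}"] jgen[of x] by (metis order.trans)
  from J_prime[OF assms(1) this] show ?thesis by blast
qed

end

theorem mainTheorem5:
  fixes mult :: "'a::complete_lattice \<Rightarrow> 'a \<Rightarrow> 'a"
    and one :: 'a and nt nm :: "'a \<Rightarrow> 'a"
  assumes "DInFL_algebra mult one nt nm"
    and "perfect_lattice TYPE('a)"
  shows "(\<forall>a\<in>Jinf. nt (kappa a) \<in> Jinf \<and> nm (kappa a) \<in> Jinf) \<and>
         DInFL_frame Jinf {i \<in> Jinf. i \<le> one} (\<lambda>a b. b \<le> a)
           (\<lambda>a b. {c \<in> Jinf. c \<le> mult a b}) (\<lambda>a. nt (kappa a)) (\<lambda>a. nm (kappa a))"
proof -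
  interpret D: dinfl mult one nt nm using assms by unfold_locales
  have J1: "\<forall>a\<in>Jinf. nt (kappa a) \<in> Jinf \<and> nm (kappa a) \<in> Jinf"
    using D.nt_kappa_J D.nm_kappa_J by blast
  have F1a: "setcirc (\<lambda>a b. {c \<in> Jinf. c \<le> mult a b}) {i \<in> Jinf. i \<le> one} {x} = {y\<in>Jinf. y \<le> x}"
    if "x \<in> Jinf" for x
  proof -
    have "y \<le> x \<longleftrightarrow> (\<exists>i\<in>Jinf. i \<le> one \<and> y \<le> mult i x)" if y: "y \<in> Jinf" for y
    proof
      assume "y \<le> x" then show "\<exists>i\<in>Jinf. i \<le> one \<and> y \<le> mult i x"
        using D.prime_l[OF y, of one x] by (simp add: D.unitl)
    next
      assume "\<exists>i\<in>Jinf. i \<le> one \<and> y \<le> mult i x"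
      then obtain i where "i \<le> one" "y \<le> mult i x" by blast
      moreover have "mult i x \<le> x" using D.mono_l[OF \<open>i \<le> one\<close>, of x] by (simp add: D.unitl)
      ultimately show "y \<le> x" using order.trans by blast
    qed
    then show ?thesis unfolding setcirc_def by auto
  qed
  have F1b: "setcirc (\<lambda>a b. {c \<in> Jinf. c \<le> mult a b}) {x} {i \<in> Jinf. i \<le> one} = {y\<in>Jinf. y \<le> x}"
    if "x \<in> Jinf" for x
  proof -
    have "y \<le> x \<longleftrightarrow> (\<exists>i\<in>Jinf. i \<le> one \<and> y \<le> mult x i)" if y: "y \<in> Jinf" for y
    proof
      assume "y \<le> x" then show "\<exists>i\<in>Jinf. i \<le> one \<and> y \<le> mult x i"
        using D.prime_r[OF y, of x one] by (simp add: D.unitr)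
    next
      assume "\<exists>i\<in>Jinf. i \<le> one \<and> y \<le> mult x i"
      then obtain i where "i \<le> one" "y \<le> mult x i" by blast
      moreover have "mult x i \<le> x" using D.mono_r[OF \<open>i \<le> one\<close>, of x] by (simp add: D.unitr)
      ultimately show "y \<le> x" using order.trans by blast
    qed
    then show ?thesis unfolding setcirc_def by auto
  qed
  have F4l: "setcirc (\<lambda>a b. {c \<in> Jinf. c \<le> mult a b}) {c \<in> Jinf. c \<le> w} {z}
       = {c \<in> Jinf. c \<le> mult w z}" for w z
  proof -
    have "c \<le> mult w z \<longleftrightarrow> (\<exists>a\<in>Jinf. a \<le> w \<and> c \<le> mult a z)" if c: "c \<in> Jinf" for c
    proof
      assume "c \<le> mult w z" then show "\<exists>a\<in>Jinf. a \<le> w \<and> c \<le> mult a z"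
        using D.prime_l[OF c] by blast
    next
      assume "\<exists>a\<in>Jinf. a \<le> w \<and> c \<le> mult a z"
      then obtain a where "a \<le> w" "c \<le> mult a z" by blast
      moreover have "mult a z \<le> mult w z" using D.mono_l[OF \<open>a \<le> w\<close>] .
      ultimately show "c \<le> mult w z" using order.trans by blast
    qed
    then show ?thesis unfolding setcirc_def by auto
  qed
  have F4r: "setcirc (\<lambda>a b. {c \<in> Jinf. c \<le> mult a b}) {x} {c \<in> Jinf. c \<le> w}
       = {c \<in> Jinf. c \<le> mult x w}" for w x
  proof -
    have "c \<le> mult x w \<longleftrightarrow> (\<exists>a\<in>Jinf. a \<le> w \<and> c \<le> mult x a)" if c: "c \<in> Jinf" for c
    proof
      assume "c \<le> mult x w" then show "\<exists>a\<in>Jinf. a \<le> w \<and> c \<le> mult x a"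
        using D.prime_r[OF c] by blast
    next
      assume "\<exists>a\<in>Jinf. a \<le> w \<and> c \<le> mult x a"
      then obtain a where "a \<le> w" "c \<le> mult x a" by blast
      moreover have "mult x a \<le> mult x w" using D.mono_r[OF \<open>a \<le> w\<close>] .
      ultimately show "c \<le> mult x w" using order.trans by blast
    qed
    then show ?thesis unfolding setcirc_def by auto
  qed
  have F4: "setcirc (\<lambda>a b. {c \<in> Jinf. c \<le> mult a b}) {c \<in> Jinf. c \<le> mult x y} {z} =
            setcirc (\<lambda>a b. {c \<in> Jinf. c \<le> mult a b}) {x} {c \<in> Jinf. c \<le> mult y z}"
    for x y z
    unfolding F4l F4r D.assoc ..
  have F5: "nt (kappa z) \<le> mult x y \<longleftrightarrow> nm (kappa y) \<le> mult z x"
    if "x \<in> Jinf" "y \<in> Jinf" "z \<in> Jinf" for x y z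
  proof -
    have "nt (kappa z) \<le> mult x y \<longleftrightarrow> \<not> z \<le> nm (mult x y)"
      using D.gal1 D.kappa_iff[OF that(3)] by blast
    moreover have "nm (kappa y) \<le> mult z x \<longleftrightarrow> \<not> y \<le> nt (mult z x)"
      using D.gal1 D.kappa_iff[OF that(2)] by (metis D.nm_nt D.nt_nm)
    moreover have "z \<le> nm (mult x y) \<longleftrightarrow> y \<le> nt (mult z x)"
    proof -
      have "z \<le> nm (mult x y) \<longleftrightarrow> mult z x \<le> nm y"
        using D.res1[of z x "nm y"] by (simp add: D.nt_nm)
      also have "\<dots> \<longleftrightarrow> y \<le> nt (mult z x)" using D.gal2 by blast
      finally show ?thesis .
    qed
    ultimately show ?thesis by blast
  qed
  have F6: "x \<le> nm (kappa (nt (kappa x))) \<and> x \<le> nt (kappa (nm (kappa x)))"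
    if x: "x \<in> Jinf" for x
  proof
    have j: "nt (kappa x) \<in> Jinf" using D.nt_kappa_J[OF x] .
    have "w \<le> kappa (nt (kappa x)) \<longleftrightarrow> x \<le> nm w" for w
      using D.kappa_iff[OF j, of w] D.kappa_iff[OF x, of "nm w"] D.gal1 by blast
    then show "x \<le> nm (kappa (nt (kappa x)))" by blast
  next
    have j: "nm (kappa x) \<in> Jinf" using D.nm_kappa_J[OF x] .
    have "w \<le> kappa (nm (kappa x)) \<longleftrightarrow> x \<le> nt w" for w
      using D.kappa_iff[OF j, of w] D.kappa_iff[OF x, of "nt w"] D.gal1
      by (metis D.nm_nt D.nt_nm)
    then show "x \<le> nt (kappa (nm (kappa x)))" by blast
  qed
  show ?thesis
    unfolding DInFL_frame_def
  proof (intro conjI)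
    show "\<forall>x\<in>Jinf. \<forall>y\<in>Jinf. \<forall>z\<in>Jinf. y \<le> x \<and> z \<le> y \<longrightarrow> z \<le> x"
      using order.trans by blast
    show "\<forall>x\<in>Jinf. \<forall>y\<in>Jinf. \<forall>u\<in>Jinf. \<forall>v\<in>Jinf.
      y \<le> x \<and> x \<in> {c \<in> Jinf. c \<le> mult u v} \<longrightarrow> y \<in> {c \<in> Jinf. c \<le> mult u v}"
      using order.trans by blast
    show "\<forall>x\<in>Jinf. \<forall>y\<in>Jinf. y \<le> x \<and> x \<in> {i \<in> Jinf. i \<le> one} \<longrightarrow> y \<in> {i \<in> Jinf. i \<le> one}"
      using order.trans by blast
  qed (use J1 F4 F5 F6 F1a F1b in auto)
qed

end
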